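(* Let $\lambda$ be a partition of $n$. Denote by $\mathsf{CS}(\lambda)_{[1,n-1]}$ the graph obtained from the crystal skeleton $\mathsf{CS}(\lambda)$ by removing all edges whose label $I$ satisfies $n\in I$. Then there is a graph isomorphism $$\mathsf{CS}(\lambda)_{[1,n-1]}\cong\bigoplus_{\lambda^-}\mathsf{CS}(\lambda^-),$$ where the sum (disjoint union) is over all partitions $\lambda^-$ such that $\lambda/\lambda^-$ is a single box.
   Context: French notation; $\mathsf{SYT}(\lambda)$ standard tableaux; $\mathsf{row}(T)$ reads rows left to right from top row to bottom row; $\mathsf{std}$ replaces the $a_j$ entries $j$, in reading order, by $a_1+\dots+a_{j-1}+1,\dots,a_1+\dots+a_j$. Crystal operator $f_i$: in the subword of letters $i,i+1$ of the reading word, bracket each $i+1$ with an unbracketed $i$ to its right (parenthesis matching); $f_i$ changes the rightmost unbracketed $i$ to $i+1$. For a permutation $\pi$ of $[N]$ and $I=[i,i+2m]\subseteq[N]$, $m\ge1$, $I$ is a Dyck pattern interval of $\pi$ if the RSK insertion tableau of the subword $\pi|_I$ of letters in $I$ has bottom row $i,\dots,i+m$ and top row $i+m+1,\dots,i+2m$; a Dyck pattern interval of $T$ is one of $\mathsf{row}(T)$. The crystal skeleton $\mathsf{CS}(\lambda)$, $|\lambda|=N$, is the directed graph on $\mathsf{SYT}(\lambda)$ with, for each Dyck pattern interval $I=[i,i+2m]$ of $T$, an edge $T\xrightarrow{I}\mathsf{std}(f_i(b))$ labeled $I$, where $b$ is obtained from $T$ by replacing entries $i,\dots,i+m$ by $i$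 and $i+m+1,\dots,i+2m$ by $i+1$. (Equivalently, it is the crystal of semistandard tableaux with each quasi-crystal $\{b:\mathsf{std}(b)=T\}$ contracted to a vertex.) Graph isomorphisms here are of directed edge-labeled graphs. *)

theory Defs
  imports Main
begin

text \<open>A partition is a weakly decreasing list of positive parts.  A tableau is a
list of rows; row 0 is the bottom (longest) row, as in French notation.\<close>

definition is_partition :: "nat \<Rightarrow> nat list \<Rightarrow> bool" where
  "is_partition n lam \<longleftrightarrow> sorted_wrt (\<ge>) lam \<and> (\<forall>k\<in>set lam. 0 < k) \<and> sum_list lam = n"

definition part_at :: "nat list \<Rightarrow> nat \<Rightarrow> nat" where
  "part_at lam k = (if k < length lam then lam ! k else 0)"

definition single_box :: "nat list \<Rightarrow> nat list \<Rightarrow> bool" where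
  "single_box lam mu \<longleftrightarrow> (\<forall>k. part_at mu k \<le> part_at lam k) \<and> sum_list mu + 1 = sum_list lam"

definition SYT :: "nat list \<Rightarrow> nat list list set" where
  "SYT lam = {T. map length T = lam
     \<and> distinct (concat T) \<and> set (concat T) = {1..sum_list lam}
     \<and> (\<forall>r\<in>set T. sorted_wrt (<) r)
     \<and> (\<forall>r c. Suc r < length T \<and> c < length (T ! Suc r) \<longrightarrow> T ! r ! c < T ! Suc r ! c)}"

definition row_word :: "nat list list \<Rightarrow> nat list" where
  "row_word T = concat (rev T)"

fun chop :: "nat list \<Rightarrow> 'a list \<Rightarrow> 'a list list" where
  "chop [] w = []"
| "chop (k # ks) w = take k w # chop ks (drop k w)"

definition reshape :: "nat list \<Rightarrow> nat list \<Rightarrow> nat list list" where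
  "reshape lam w = rev (chop (rev lam) w)"

definition std_word :: "nat list \<Rightarrow> nat list" where
  "std_word w = map (\<lambda>k. card {j. j < length w \<and> w ! j < w ! k}
                        + card {j. j < k \<and> w ! j = w ! k} + 1) [0..<length w]"

text \<open>Positions of unbracketed letters i (each i+1 is bracketed with an unbracketed i
to its right).  Arguments: i, number of currently open (unmatched) i+1, current position.\<close>
fun unbr :: "nat \<Rightarrow> nat \<Rightarrow> nat \<Rightarrow> nat list \<Rightarrow> nat list" where
  "unbr i c p [] = []"
| "unbr i c p (x # xs) =
     (if x = Suc i then unbr i (Suc c) (Suc p) xs
      else if x = i then (if 0 < c then unbr i (c - 1) (Suc p) xs else p # unbr i c (Suc p) xs)
      else unbr i c (Suc p) xs)"

definition f_op :: "nat \<Rightarrow> nat list \<Rightarrow> nat list option" where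
  "f_op i w = (let U = unbr i 0 0 w in if U = [] then None else Some (w[last U := Suc i]))"

fun row_insert :: "nat \<Rightarrow> nat list \<Rightarrow> nat list \<times> nat option" where
  "row_insert x [] = ([x], None)"
| "row_insert x (y # ys) = (if x < y then (x # ys, Some y)
                            else (let (r, b) = row_insert x ys in (y # r, b)))"

fun rsk_insert :: "nat \<Rightarrow> nat list list \<Rightarrow> nat list list" where
  "rsk_insert x [] = [[x]]"
| "rsk_insert x (r # rs) = (case row_insert x r of
       (r', None) \<Rightarrow> r' # rs
     | (r', Some y) \<Rightarrow> r' # rsk_insert y rs)"

definition rsk_P :: "nat list \<Rightarrow> nat list list" where
  "rsk_P w = foldl (\<lambda>T x. rsk_insert x T) [] w"

definition dyck_interval :: "nat \<Rightarrow> nat list \<Rightarrow> nat \<Rightarrow> nat \<Rightarrow> bool" where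
  "dyck_interval N w i m \<longleftrightarrow> 1 \<le> m \<and> 1 \<le> i \<and> i + 2 * m \<le> N \<and>
     rsk_P (filter (\<lambda>x. i \<le> x \<and> x \<le> i + 2 * m) w) = [[i..<i + m + 1], [i + m + 1..<i + 2 * m + 1]]"

definition collapse :: "nat \<Rightarrow> nat \<Rightarrow> nat list \<Rightarrow> nat list" where
  "collapse i m w = map (\<lambda>x. if i \<le> x \<and> x \<le> i + m then i
                             else if i + m < x \<and> x \<le> i + 2 * m then Suc i else x) w"

text \<open>Directed edge-labelled graphs: vertex set and set of (source, label, target).\<close>
type_synonym ('v, 'l) lgraph = "'v set \<times> ('v \<times> 'l \<times> 'v) set"

definition CS :: "nat list \<Rightarrow> (nat list list, nat set) lgraph" where
  "CS lam = (SYT lam,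
     {(T, {i..i + 2 * m}, reshape lam (std_word b')) | T i m b'.
        T \<in> SYT lam \<and> dyck_interval (sum_list lam) (row_word T) i m
        \<and> f_op i (collapse i m (row_word T)) = Some b'})"

definition remove_label_containing :: "nat \<Rightarrow> ('v, nat set) lgraph \<Rightarrow> ('v, nat set) lgraph" where
  "remove_label_containing n G = (fst G, {e \<in> snd G. n \<notin> fst (snd e)})"

definition disj_union :: "'i set \<Rightarrow> ('i \<Rightarrow> ('v, 'l) lgraph) \<Rightarrow> ('i \<times> 'v, 'l) lgraph" where
  "disj_union S G = (SIGMA a:S. fst (G a),
     {((a, u), l, (a, v)) | a u l v. a \<in> S \<and> (u, l, v) \<in> snd (G a)})"

definition lgraph_iso :: "('a, 'l) lgraph \<Rightarrow> ('b, 'l) lgraph \<Rightarrow> bool" where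
  "lgraph_iso G H \<longleftrightarrow> (\<exists>f. bij_betw f (fst G) (fst H) \<and>
     (\<forall>u\<in>fst G. \<forall>v\<in>fst G. \<forall>l. (u, l, v) \<in> snd G \<longleftrightarrow> (f u, l, f v) \<in> snd H))"

end

theory Submission
  imports Defs "HOL-Library.Multiset"
begin

definition ins :: "nat \<Rightarrow> 'a \<Rightarrow> 'a list \<Rightarrow> 'a list" where
  "ins p x w = take p w @ x # drop p w"

definition addbox :: "nat \<Rightarrow> 'a \<Rightarrow> 'a list list \<Rightarrow> 'a list list" where
  "addbox r x X = (if r < length X then X[r := X ! r @ [x]] else X @ [[x]])"

definition addpart :: "nat \<Rightarrow> nat list \<Rightarrow> nat list" where
  "addpart r mu = (if r < length mu then mu[r := Suc (mu ! r)] else mu @ [1])"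

lemma length_ins[simp]: "p \<le> length w \<Longrightarrow> length (ins p x w) = Suc (length w)"
  by (simp add: ins_def)

lemma mset_ins[simp]: "mset (ins p x w) = add_mset x (mset w)"
  by (metis ins_def append_take_drop_id mset_append mset.simps(2) union_mset_add_mset_right)

lemma set_ins[simp]: "set (ins p x w) = insert x (set w)"
  by (metis mset_ins set_mset_mset set_mset_add_mset_insert)

lemma filter_ins: "\<not> P x \<Longrightarrow> filter P (ins p x w) = filter P w"
  by (metis ins_def append_take_drop_id filter.simps(2) filter_append)

lemma map_ins: "map f (ins p x w) = ins p (f x) (map f w)"
  by (simp add: ins_def take_map drop_map)

lemma map_length_addbox: "r \<le> length X \<Longrightarrow> map length (addbox r x X) = addpart r (map length X)"
  by (auto simp: addbox_def addpart_def map_update)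

lemma row_word_addbox:
  assumes "r \<le> length X"
  shows "row_word (addbox r x X) = ins (sum_list (map length (drop r X))) x (row_word X)"
proof (cases "r < length X")
  case False
  then have "r = length X" using assms by simp
  then show ?thesis using False by (simp add: addbox_def row_word_def ins_def)
next
  case True
  define A B where "A = take r X" and "B = drop (Suc r) X"
  have X: "X = A @ [X ! r] @ B" using True unfolding A_def B_def by (simp add: id_take_nth_drop)
  have lA: "length A = r" using True A_def by simp
  have u: "X[r := X ! r @ [x]] = A @ [X ! r @ [x]] @ B"
    by (subst X, simp add: list_update_append lA)
  have d: "drop r X = X ! r # B" using True B_def by (simp add: Cons_nth_drop_Suc)
  have e: "sum_list (map length (drop r X)) = length (concat (rev B) @ X ! r)"
    by (simp add: d length_concat sum_list_rev rev_map[symmetric])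
  have "row_word X = (concat (rev B) @ X ! r) @ concat (rev A)"
    by (subst X, simp add: row_word_def)
  then show ?thesis using True u e
    by (simp add: addbox_def row_word_def ins_def)
qed

lemma chop_concat: "chop (map length Ts) (concat Ts) = Ts"
  by (induction Ts) auto

lemma chop_props: "length w = sum_list ks \<Longrightarrow> concat (chop ks w) = w \<and> map length (chop ks w) = ks"
  by (induction ks arbitrary: w) (auto simp: min_def)

lemma reshape_row_word: "map length T = lam \<Longrightarrow> reshape lam (row_word T) = T"
  unfolding reshape_def row_word_def
  by (metis chop_concat rev_map rev_rev_ident)

lemma reshape_props: assumes "length w = sum_list lam"
  shows "row_word (reshape lam w) = w" "map length (reshape lam w) = lam"
proof -
  have "length w = sum_list (rev lam)" using assms by (simp add: sum_list_rev)
  from chop_props[OF this] show "row_word (reshape lam w) = w" "map length (reshape lam w) = lam"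
    by (auto simp: reshape_def row_word_def rev_map[symmetric])
qed

lemma length_row_word: "length (row_word T) = sum_list (map length T)"
  by (simp add: row_word_def length_concat sum_list_rev rev_map[symmetric])

lemma reshape_ins:
  assumes "length v = sum_list mu" "r \<le> length mu"
  shows "reshape (addpart r mu) (ins (sum_list (drop r mu)) x v) = addbox r x (reshape mu v)"
proof -
  let ?Y = "reshape mu v"
  have 1: "row_word ?Y = v" "map length ?Y = mu" using reshape_props[OF assms(1)] by auto
  have lY: "r \<le> length ?Y" using 1(2) assms(2) by (metis length_map)
  have "row_word (addbox r x ?Y) = ins (sum_list (drop r mu)) x v"
    using row_word_addbox[OF lY] 1 by (simp add: drop_map[symmetric])
  moreover have "map length (addbox r x ?Y) = addpart r mu"
    using map_length_addbox[OF lY] 1 by simp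
  ultimately show ?thesis using reshape_row_word by metis
qed

lemma mset_row_word: "mset (row_word T) = mset (concat T)"
  unfolding row_word_def by (induction T) auto

lemma unbr_Suc: "unbr i c (Suc q) ys = map Suc (unbr i c q ys)"
  by (induction ys arbitrary: c q) auto

lemma unbr_ge: "j \<in> set (unbr i c q ys) \<Longrightarrow> q \<le> j \<and> j < q + length ys"
proof (induction ys arbitrary: c q)
  case Nil then show ?case by simp
next
  case (Cons a ys)
  from Cons.prems have "j \<in> set (unbr i (Suc c) (Suc q) ys) \<or> j \<in> set (unbr i (c - 1) (Suc q) ys) \<or> j = q \<or> j \<in> set (unbr i c (Suc q) ys)"
    by (simp split: if_splits)
  moreover note Cons.IH[of "Suc c" "Suc q"] Cons.IH[of "c - 1" "Suc q"] Cons.IH[of c "Suc q"]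
  ultimately show ?case by auto
qed

lemma unbr_ins:
  assumes "x \<noteq> i" "x \<noteq> Suc i"
  shows "unbr i c q (xs @ x # ys) = map (\<lambda>j. if j < q + length xs then j else Suc j) (unbr i c q (xs @ ys))"
proof (induction xs arbitrary: c q)
  case Nil
  have "map (\<lambda>j. if j < q then j else Suc j) (unbr i c q ys) = map Suc (unbr i c q ys)"
    using unbr_ge[of _ i c q ys] by (intro map_cong) (auto dest: leD)
  then show ?case using assms by (simp add: unbr_Suc)
next
  case (Cons a xs)
  have h: "\<And>c q. unbr i c (Suc q) (xs @ x # ys) = map (\<lambda>j. if j < Suc q + length xs then j else Suc j) (unbr i c (Suc q) (xs @ ys))"
    using Cons.IH by blast
  show ?case
    by (cases "a = Suc i"; cases "a = i"; cases "0 < c") (simp_all add: h)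
qed

lemma f_op_ins:
  assumes "x \<noteq> i" "x \<noteq> Suc i" "p \<le> length w"
  shows "f_op i (ins p x w) = map_option (ins p x) (f_op i w)"
proof -
  define xs ys where "xs = take p w" and "ys = drop p w"
  have w: "w = xs @ ys" and lx: "length xs = p" using assms(3) by (auto simp: xs_def ys_def)
  define \<phi> where "\<phi> = (\<lambda>j::nat. if j < p then j else Suc j)"
  have U: "unbr i 0 0 (ins p x w) = map \<phi> (unbr i 0 0 w)"
    unfolding ins_def \<phi>_def using unbr_ins[OF assms(1,2), of 0 0 xs ys] lx assms(3)
    by (auto simp: xs_def ys_def intro!: map_cong)
  show ?thesis
  proof (cases "unbr i 0 0 w = []")
    case True
    then show ?thesis using U by (simp add: f_op_def)
  next
    case False
    define j where "j = last (unbr i 0 0 w)"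
    have jl: "j < length w" using unbr_ge[of j i 0 0 w] False by (simp add: j_def)
    have lU: "last (unbr i 0 0 (ins p x w)) = \<phi> j" using U False by (simp add: j_def last_map)
    have "(ins p x w)[\<phi> j := Suc i] = ins p x (w[j := Suc i])"
    proof (cases "j < p")
      case True
      then show ?thesis unfolding ins_def \<phi>_def using lx
        by (simp add: list_update_append xs_def[symmetric] ys_def[symmetric] w)
    next
      case False
      then have "Suc j - p = Suc (j - p)" by simp
      then show ?thesis unfolding ins_def \<phi>_def using lx False
        by (simp add: list_update_append xs_def[symmetric] ys_def[symmetric] w)
    qed
    then show ?thesis using U False lU by (simp add: f_op_def j_def)
  qed
qed

lemma collapse_ins: "i + 2 * m < x \<Longrightarrow> collapse i m (ins p x w) = ins p x (collapse i m w)"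
  unfolding collapse_def by (simp add: map_ins)

lemma set_collapse: "set (collapse i m w) \<subseteq> set w \<union> {i, Suc i}"
  unfolding collapse_def by auto

lemma length_collapse[simp]: "length (collapse i m w) = length w"
  unfolding collapse_def by simp

lemma f_op_set: "f_op i w = Some b \<Longrightarrow> set b \<subseteq> insert (Suc i) (set w) \<and> length b = length w"
proof -
  assume a: "f_op i w = Some b"
  then obtain j where "b = w[j := Suc i]" unfolding f_op_def by (auto simp: Let_def split: if_splits)
  then show ?thesis using set_update_subset_insert[of w j "Suc i"] by auto
qed

lemma nth_ins: "p \<le> length w \<Longrightarrow> k < Suc (length w) \<Longrightarrow>
   ins p x w ! k = (if k < p then w ! k else if k = p then x else w ! (k - 1))"
  unfolding ins_def by (auto simp: nth_append min_def nth_Cons' not_less)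

lemma take_ins1: "k \<le> p \<Longrightarrow> p \<le> length w \<Longrightarrow> take k (ins p x w) = take k w"
  unfolding ins_def by (simp add: min_def)

lemma take_ins2: "p < k \<Longrightarrow> p \<le> length w \<Longrightarrow> take k (ins p x w) = ins p x (take (k - 1) w)"
proof -
  assume a: "p < k" "p \<le> length w"
  then obtain k' where k: "k = Suc k'" "p \<le> k'" by (cases k) auto
  then have "Suc k' - p = Suc (k' - p)" by simp
  then show ?thesis using a k by (simp add: ins_def min_def drop_take)
qed

lemma std_nth: "k < length w \<Longrightarrow> std_word w ! k =
   length (filter (\<lambda>y. y < w ! k) w) + length (filter (\<lambda>y. y = w ! k) (take k w)) + 1"
proof -
  assume k: "k < length w"
  have 1: "card {j. j < length w \<and> w ! j < w ! k} = length (filter (\<lambda>y. y < w ! k) w)"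
    by (simp add: length_filter_conv_card)
  have "{j. j < k \<and> w ! j = w ! k} = {j. j < length (take k w) \<and> take k w ! j = w ! k}"
    using k by auto
  then have 2: "card {j. j < k \<and> w ! j = w ! k} = length (filter (\<lambda>y. y = w ! k) (take k w))"
    by (simp add: length_filter_conv_card)
  show ?thesis using k 1 2 by (simp add: std_word_def)
qed

lemma length_std[simp]: "length (std_word w) = length w"
  by (simp add: std_word_def)

lemma std_ins:
  assumes lt: "\<forall>y\<in>set b. y < x" and p: "p \<le> length b"
  shows "std_word (ins p x b) = ins p (Suc (length b)) (std_word b)"
proof (rule nth_equalityI)
  show "length (std_word (ins p x b)) = length (ins p (Suc (length b)) (std_word b))"
    using p by simp
  fix k assume "k < length (std_word (ins p x b))"
  then have k: "k < Suc (length b)" using p by simp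
  have lw: "k < length (ins p x b)" using k p by simp
  consider "k < p" | "k = p" | "p < k" by linarith
  then show "std_word (ins p x b) ! k = ins p (Suc (length b)) (std_word b) ! k"
  proof cases
    case 1
    have bk: "b ! k < x" using lt 1 p by auto
    have "std_word (ins p x b) ! k = length (filter (\<lambda>y. y < b ! k) (ins p x b)) + length (filter (\<lambda>y. y = b ! k) (take k (ins p x b))) + 1"
      using std_nth[OF lw] nth_ins[OF p k] 1 by simp
    also have "\<dots> = std_word b ! k"
      using std_nth[of k b] 1 p bk by (simp add: filter_ins take_ins1)
    finally show ?thesis using nth_ins[of p "std_word b" k] 1 p k by simp
  next
    case 2
    have "std_word (ins p x b) ! k = length (filter (\<lambda>y. y < x) (ins p x b)) + length (filter (\<lambda>y. y = x) (take k (ins p x b))) + 1"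
      using std_nth[OF lw] nth_ins[OF p k] 2 by simp
    also have "\<dots> = Suc (length b)"
    proof -
      have "filter (\<lambda>y. y < x) (ins p x b) = b" using lt by (simp add: filter_ins)
      moreover have "filter (\<lambda>y. y = x) (take k (ins p x b)) = []"
        using 2 p lt by (auto simp: take_ins1 filter_empty_conv dest: in_set_takeD)
      ultimately show ?thesis by simp
    qed
    finally show ?thesis using nth_ins[of p "std_word b" k] 2 p k by simp
  next
    case 3
    define k' where "k' = k - 1"
    have k': "k' < length b" "k = Suc k'" using 3 k by (auto simp: k'_def)
    have bk: "b ! k' < x" using lt k' by auto
    have "std_word (ins p x b) ! k = length (filter (\<lambda>y. y < b ! k') (ins p x b)) + length (filter (\<lambda>y. y = b ! k') (take k (ins p x b))) + 1"
      using std_nth[OF lw] nth_ins[OF p k] 3 k' by simp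
    also have "\<dots> = std_word b ! k'"
    proof -
      have "take k (ins p x b) = ins p x (take k' b)" using take_ins2[OF 3 p] k' by simp
      moreover have "p \<le> length (take k' b)" using 3 k' by simp
      ultimately show ?thesis using std_nth[of k' b] k' bk by (simp add: filter_ins)
    qed
    finally show ?thesis using nth_ins[of p "std_word b" k] 3 p k k' by simp
  qed
qed

lemma std_bound: "y \<in> set (std_word w) \<Longrightarrow> y \<le> length w"
proof -
  assume "y \<in> set (std_word w)"
  then obtain k where k: "k < length w" and y: "y = std_word w ! k"
    by (auto simp: in_set_conv_nth)
  let ?A = "{j. j < length w \<and> w ! j < w ! k}" and ?B = "{j. j < k \<and> w ! j = w ! k}"
  have "?A \<union> ?B \<subseteq> {..<length w} - {k}" using k by auto
  then have "card (?A \<union> ?B) \<le> card ({..<length w} - {k})" by (intro card_mono) auto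
  moreover have "card (?A \<union> ?B) = card ?A + card ?B" by (intro card_Un_disjoint) auto
  moreover have "card ({..<length w} - {k}) = length w - 1" using k by simp
  ultimately have "card ?A + card ?B \<le> length w - 1" by simp
  then show ?thesis using y k by (simp add: std_word_def)
qed

lemma part_at_addpart: "r \<le> length mu \<Longrightarrow>
  part_at (addpart r mu) k = part_at mu k + (if k = r then 1 else 0)"
  unfolding part_at_def addpart_def by (auto simp: nth_append nth_list_update)

lemma sum_list_addpart: "r \<le> length mu \<Longrightarrow> sum_list (addpart r mu) = Suc (sum_list mu)"
  unfolding addpart_def by (auto simp: sum_list_update)

lemma single_box_addpart: "r \<le> length mu \<Longrightarrow> single_box (addpart r mu) mu"
  unfolding single_box_def using part_at_addpart sum_list_addpart by simp

lemma addpart_inj: "r \<le> length mu \<Longrightarrow> r' \<le> length mu \<Longrightarrow> addpart r mu = addpart r' mu \<Longrightarrow> r = r'"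
  using part_at_addpart[of r mu r] part_at_addpart[of r' mu r] by (metis add.right_neutral n_not_Suc_n Suc_eq_plus1)

lemma part_at_pos: "0 < part_at xs k \<Longrightarrow> k < length xs"
  unfolding part_at_def by (auto split: if_splits)

lemma part_at_eq:
  assumes "\<forall>k\<in>set xs. 0 < k" "\<forall>k\<in>set ys. 0 < k" "\<And>k. part_at xs k = part_at ys k"
  shows "xs = ys"
proof -
  have "\<not> length xs < length ys"
  proof
    assume a: "length xs < length ys"
    then have "0 < part_at ys (length xs)" using assms(2) by (simp add: part_at_def)
    then show False using assms(3)[of "length xs"] by (simp add: part_at_def)
  qed
  moreover have "\<not> length ys < length xs"
  proof
    assume a: "length ys < length xs"
    then have "0 < part_at xs (length ys)" using assms(1) by (simp add: part_at_def)
    then show False using assms(3)[of "length ys"] by (simp add: part_at_def)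
  qed
  ultimately have l: "length xs = length ys" by simp
  show ?thesis
  proof (rule nth_equalityI)
    show "length xs = length ys" by fact
    fix k assume "k < length xs"
    then show "xs ! k = ys ! k" using assms(3)[of k] l by (simp add: part_at_def)
  qed
qed

lemma sum_list_part_at: "length xs \<le> K \<Longrightarrow> sum_list xs = (\<Sum>k<K. part_at xs k)"
proof -
  assume K: "length xs \<le> K"
  have "sum_list xs = (\<Sum>k<length xs. part_at xs k)"
    by (simp add: sum_list_sum_nth atLeast0LessThan part_at_def)
  also have "\<dots> = (\<Sum>k<K. part_at xs k)"
    using K by (intro sum.mono_neutral_left) (auto simp: part_at_def)
  finally show ?thesis .
qed

lemma partition_part_at_mono:
  assumes "is_partition n lam" "i \<le> j"
  shows "part_at lam j \<le> part_at lam i"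
proof (cases "j < length lam")
  case True
  then show ?thesis using assms sorted_wrt_nth_less[of "(\<ge>)" lam i j]
    by (cases "i = j") (auto simp: is_partition_def part_at_def)
next
  case False
  then show ?thesis by (simp add: part_at_def)
qed

lemma addpart_pos: "\<forall>k\<in>set mu. 0 < k \<Longrightarrow> \<forall>k\<in>set (addpart r mu). 0 < k"
  unfolding addpart_def by (auto dest: set_update_subset_insert[THEN subsetD])

lemma single_box_ex:
  assumes lam: "is_partition n lam" and mu: "is_partition (n - 1) mu" and sb: "single_box lam mu"
  shows "\<exists>r \<le> length mu. lam = addpart r mu"
proof -
  define K where "K = length lam + length mu"
  define d where "d k = part_at lam k - part_at mu k" for k
  have le: "part_at mu k \<le> part_at lam k" for k using sb by (simp add: single_box_def)
  have sl: "sum_list lam = (\<Sum>k<K. part_at lam k)" "sum_list mu = (\<Sum>k<K. part_at mu k)"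
    by (auto simp: K_def intro: sum_list_part_at)
  have "(\<Sum>k<K. part_at lam k) = (\<Sum>k<K. part_at mu k + d k)"
    using le by (intro sum.cong) (auto simp: d_def)
  then have "(\<Sum>k<K. part_at lam k) = (\<Sum>k<K. part_at mu k) + (\<Sum>k<K. d k)"
    by (simp add: sum.distrib)
  then have sd: "(\<Sum>k<K. d k) = 1" using sb sl by (simp add: single_box_def)
  then obtain r where r: "r < K" "d r \<noteq> 0"
    by (metis sum.neutral lessThan_iff zero_neq_one)
  have dr: "d r \<le> 1" using sd r member_le_sum[of r "{..<K}" d] by auto
  have dk: "d k = 0" if "k \<noteq> r" for k
  proof (cases "k < K")
    case True
    have "d r + d k \<le> (\<Sum>k<K. d k)"
      using sum_mono2[of "{..<K}" "{r, k}" d] True r that by auto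
    then show ?thesis using sd r by simp
  next
    case False
    then show ?thesis by (auto simp: d_def part_at_def K_def)
  qed
  have pa: "part_at lam k = part_at mu k + (if k = r then 1 else 0)" for k
    using le[of k] dk[of k] dr r by (auto simp: d_def)
  have rl: "r \<le> length mu"
  proof (rule ccontr)
    assume "\<not> r \<le> length mu"
    then have a: "length mu < r" by simp
    then have "part_at lam r = 1" "part_at lam (r - 1) = 0"
      using pa[of r] pa[of "r - 1"] by (auto simp: part_at_def)
    moreover have "part_at lam r \<le> part_at lam (r - 1)"
      using partition_part_at_mono[OF lam] by simp
    ultimately show False by simp
  qed
  have "lam = addpart r mu"
    using lam mu addpart_pos[of mu r] part_at_addpart[OF rl] pa
    by (intro part_at_eq) (auto simp: is_partition_def)
  then show ?thesis using rl by blast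
qed

definition rowX :: "'a list list \<Rightarrow> nat \<Rightarrow> 'a list" where
  "rowX X r = (if r < length X then X ! r else [])"

lemma length_addbox: "r \<le> length X \<Longrightarrow>
  length (addbox r x X) = (if r < length X then length X else Suc (length X))"
  unfolding addbox_def by auto

lemma nth_addbox: "r \<le> length X \<Longrightarrow> k < length (addbox r x X) \<Longrightarrow>
  addbox r x X ! k = (if k = r then rowX X r @ [x] else X ! k)"
  unfolding addbox_def rowX_def by (auto simp: nth_append nth_list_update split: if_splits)

lemma set_addbox: "r \<le> length X \<Longrightarrow> set (addbox r x X) \<subseteq> insert (rowX X r @ [x]) (set X)"
  unfolding addbox_def rowX_def by (auto dest: set_update_subset_insert[THEN subsetD])

lemma row_word_addbox':
  "r \<le> length X \<Longrightarrow> \<exists>p \<le> length (row_word X). row_word (addbox r x X) = ins p x (row_word X)"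
proof -
  assume r: "r \<le> length X"
  have "sum_list (map length (drop r X)) \<le> sum_list (map length X)"
    by (metis append_take_drop_id le_add2 map_append sum_list_append)
  then show ?thesis using row_word_addbox[OF r] length_row_word by metis
qed

lemma distinct_ins: "distinct (ins p x w) \<longleftrightarrow> distinct (x # w)"
  by (rule mset_eq_imp_distinct_iff) simp

lemma distinct_row_word: "distinct (row_word T) \<longleftrightarrow> distinct (concat T)"
  by (rule mset_eq_imp_distinct_iff) (simp add: mset_row_word)

lemma set_row_word: "set (row_word T) = set (concat T)"
  by (simp add: row_word_def)

lemma concat_addbox:
  fixes X :: "nat list list"
  assumes "r \<le> length X"
  shows "set (concat (addbox r x X)) = insert x (set (concat X))"
    "distinct (concat (addbox r x X)) \<longleftrightarrow> distinct (concat X) \<and> x \<notin> set (concat X)"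
proof -
  obtain p where p: "row_word (addbox r x X) = ins p x (row_word X)"
    using row_word_addbox'[of r X x] assms by blast
  have "set (concat (addbox r x X)) = set (row_word (addbox r x X))" by (simp only: set_row_word)
  also have "\<dots> = insert x (set (row_word X))" by (simp add: p)
  finally show "set (concat (addbox r x X)) = insert x (set (concat X))" by (simp only: set_row_word)
  have "distinct (concat (addbox r x X)) \<longleftrightarrow> distinct (row_word (addbox r x X))" by (simp only: distinct_row_word)
  also have "\<dots> \<longleftrightarrow> distinct (x # row_word X)" by (simp add: p distinct_ins)
  also have "\<dots> \<longleftrightarrow> distinct (concat X) \<and> x \<notin> set (concat X)"
    by (simp only: distinct.simps distinct_row_word set_row_word) blast
  finally show "distinct (concat (addbox r x X)) \<longleftrightarrow> distinct (concat X) \<and> x \<notin> set (concat X)" .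
qed

lemma entry_in: "k < length T \<Longrightarrow> c < length (T ! k) \<Longrightarrow> T ! k ! c \<in> set (concat T)"
  by (auto intro!: bexI[of _ "T ! k"])

lemma SYT_sub:
  assumes T: "T \<in> SYT lam" and n: "sum_list lam = n" and r: "r \<le> length X"
    and TX: "T = addbox r n X"
    and mono: "\<And>k. Suc k < length X \<Longrightarrow> length (X ! Suc k) \<le> length (X ! k)"
  shows "X \<in> SYT (map length X) \<and> n \<notin> set (concat X) \<and> sum_list (map length X) = n - 1"
proof -
  have dT: "distinct (concat T)" and sT: "set (concat T) = {1..n}"
    using T n by (auto simp: SYT_def)
  have dX: "distinct (concat X)" and nX: "n \<notin> set (concat X)"
    using dT concat_addbox(2)[OF r, of n] TX by auto
  have "insert n (set (concat X)) = {1..n}"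
    using sT concat_addbox(1)[OF r, of n] TX by simp
  then have "set (concat X) = {1..n} - {n}" using nX by (metis Diff_insert_absorb)
  then have sX: "set (concat X) = {1..n - 1}" by auto
  have len: "sum_list (map length X) = n - 1"
    using distinct_card[OF dX] sX by (simp add: length_concat)
  have lT: "length X \<le> length T" using length_addbox[OF r, of n] TX by simp
  have rowT: "T ! k = X ! k \<or> T ! k = X ! k @ [n]" if "k < length X" for k
    using nth_addbox[OF r, of k n] that lT TX by (auto simp: rowX_def)
  have sorted: "sorted_wrt (<) row" if "row \<in> set X" for row
  proof -
    obtain k where k: "k < length X" "row = X ! k" using \<open>row \<in> set X\<close> by (auto simp: in_set_conv_nth)
    have "T ! k \<in> set T" using k lT by simp
    then have "sorted_wrt (<) (T ! k)" using T by (auto simp: SYT_def)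
    then show ?thesis using rowT[OF k(1)] k by (auto simp: sorted_wrt_append)
  qed
  have entry: "T ! k ! c = X ! k ! c" if "k < length X" "c < length (X ! k)" for k c
    using rowT[OF that(1)] that(2) by (auto simp: nth_append)
  have col: "X ! k ! c < X ! Suc k ! c" if "Suc k < length X" "c < length (X ! Suc k)" for k c
  proof -
    have c1: "c < length (X ! k)" using mono[OF that(1)] that(2) by simp
    have "c < length (T ! Suc k)" using rowT[OF that(1)] that(2) by auto
    then have "T ! k ! c < T ! Suc k ! c" using T that lT by (auto simp: SYT_def)
    then show ?thesis using entry[of k c] entry[of "Suc k" c] that c1 by simp
  qed
  show ?thesis using dX sX len sorted col nX by (auto simp: SYT_def)
qed

lemma sorted_ge_adj: "(\<And>k. Suc k < length xs \<Longrightarrow> xs ! Suc k \<le> xs ! k) \<Longrightarrow> sorted_wrt (\<ge>) (xs::nat list)"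
proof -
  assume a: "\<And>k. Suc k < length xs \<Longrightarrow> xs ! Suc k \<le> xs ! k"
  have t: "transp ((\<ge>)::nat\<Rightarrow>nat\<Rightarrow>bool)" by (rule transpI) simp
  show ?thesis by (rule iffD2[OF sorted_wrt_iff_nth_Suc_transp[OF t]]) (use a in blast)
qed

lemma SYT_remove:
  assumes T: "T \<in> SYT lam" and lam: "is_partition n lam" and n: "1 \<le> n"
  shows "\<exists>r X. r \<le> length X \<and> T = addbox r n X \<and> is_partition (n - 1) (map length X)
            \<and> X \<in> SYT (map length X) \<and> n \<notin> set (concat X)"
proof -
  have mlT: "map length T = lam" and sT: "set (concat T) = {1..n}"
    and rows: "\<forall>row\<in>set T. sorted_wrt (<) row"
    and colT: "\<And>r c. Suc r < length T \<Longrightarrow> c < length (T ! Suc r) \<Longrightarrow> T ! r ! c < T ! Suc r ! c"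
    using T lam by (auto simp: SYT_def is_partition_def)
  have lT: "length T = length lam" using mlT by auto
  have lenk: "length (T ! k) = lam ! k" if "k < length T" for k using mlT that by auto
  have pos: "0 < length (T ! k)" if "k < length T" for k
    using lenk[OF that] lam that lT by (auto simp: is_partition_def)
  have slam: "lam ! j \<le> lam ! i" if "i \<le> j" "j < length lam" for i j
    using lam that sorted_wrt_nth_less[of "(\<ge>)" lam i j] by (cases "i = j") (auto simp: is_partition_def)
  have bound: "T ! k ! j \<le> n" if "k < length T" "j < length (T ! k)" for k j
    using entry_in[OF that] sT by auto
  have "n \<in> set (concat T)" using sT n by auto
  then obtain r c where r: "r < length T" and c: "c < length (T ! r)" and rc: "T ! r ! c = n"
    by (auto simp: in_set_conv_nth)
  have clast: "Suc c = length (T ! r)"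
  proof (rule ccontr)
    assume "Suc c \<noteq> length (T ! r)"
    then have "Suc c < length (T ! r)" using c by simp
    moreover have "sorted_wrt (<) (T ! r)" using rows r by simp
    ultimately have "T ! r ! c < T ! r ! Suc c" using sorted_wrt_nth_less by blast
    then show False using bound[OF r, of "Suc c"] \<open>Suc c < length (T ! r)\<close> rc by simp
  qed
  have corner: "length (T ! Suc r) \<le> c" if "Suc r < length T"
  proof (rule ccontr)
    assume "\<not> length (T ! Suc r) \<le> c"
    then have "T ! r ! c < T ! Suc r ! c" using colT[OF that] by simp
    then show False using bound[OF that, of c] \<open>\<not> length (T ! Suc r) \<le> c\<close> rc by simp
  qed
  obtain X where rX: "r \<le> length X" and TX: "T = addbox r n X"
    and mono: "\<And>k. Suc k < length X \<Longrightarrow> length (X ! Suc k) \<le> length (X ! k)"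
    and posX: "\<And>k. k < length X \<Longrightarrow> 0 < length (X ! k)"
  proof (cases "c = 0")
    case True
    have rl: "Suc r = length T"
    proof (rule ccontr)
      assume "Suc r \<noteq> length T"
      then have "Suc r < length T" using r by simp
      then show False using corner pos True by fastforce
    qed
    define X where "X = butlast T"
    have lX: "length X = r" using rl by (simp add: X_def)
    have Tr: "T ! r = [n]" using clast True rc
      by (metis One_nat_def length_0_conv length_Suc_conv nth_Cons_0)
    have "T = X @ [T ! r]"
      using rl X_def by (metis append_butlast_last_id diff_Suc_1 last_conv_nth length_0_conv nat.distinct(1))
    then have "T = addbox r n X" using Tr lX by (simp add: addbox_def)
    moreover have "length (X ! Suc k) \<le> length (X ! k)" if "Suc k < length X" for k
      using that lX rl lenk slam[of k "Suc k"] lT by (simp add: X_def nth_butlast)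
    moreover have "0 < length (X ! k)" if "k < length X" for k
      using that lX rl pos by (simp add: X_def nth_butlast)
    ultimately show ?thesis using that lX by blast
  next
    case False
    define X where "X = T[r := butlast (T ! r)]"
    have lX: "length X = length T" by (simp add: X_def)
    have Xr: "length (X ! r) = c" using r clast by (simp add: X_def)
    have Xk: "X ! k = T ! k" if "k \<noteq> r" for k using that by (simp add: X_def)
    have "butlast (T ! r) @ [n] = T ! r"
      using clast rc by (metis append_butlast_last_id diff_Suc_1 last_conv_nth length_0_conv nat.distinct(1))
    then have "T = addbox r n X" using r by (simp add: addbox_def X_def)
    moreover have "length (X ! Suc k) \<le> length (X ! k)" if "Suc k < length X" for k
    proof -
      consider "k = r" | "Suc k = r" | "k \<noteq> r" "Suc k \<noteq> r" by blast
      then show ?thesis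
      proof cases
        case 1 then show ?thesis using corner that lX Xr Xk by simp
      next
        case 2
        have "length (T ! r) \<le> length (T ! k)" using lenk slam[of k r] r 2 lT by simp
        then show ?thesis using 2 Xr Xk clast by simp
      next
        case 3 then show ?thesis using Xk lenk slam[of k "Suc k"] that lX lT by simp
      qed
    qed
    moreover have "0 < length (X ! k)" if "k < length X" for k
      using that lX pos Xk Xr False by (cases "k = r") auto
    ultimately show ?thesis using that lX r by (metis less_imp_le)
  qed
  have sl: "sum_list lam = n" using lam by (simp add: is_partition_def)
  from SYT_sub[OF T sl rX TX mono]
  have X: "X \<in> SYT (map length X)" "n \<notin> set (concat X)" "sum_list (map length X) = n - 1" by auto
  have "is_partition (n - 1) (map length X)"
    unfolding is_partition_def using X(3) mono posX
    by (auto intro!: sorted_ge_adj simp: in_set_conv_nth)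
  then show ?thesis using rX TX X by blast
qed

lemma SYT_add:
  assumes X: "X \<in> SYT mu" and mu: "is_partition (n - 1) mu" and lam: "is_partition n lam"
    and r: "r \<le> length mu" and la: "lam = addpart r mu" and n: "1 \<le> n"
  shows "addbox r n X \<in> SYT lam"
proof -
  have mlX: "map length X = mu" and sX: "set (concat X) = {1..n - 1}" and dX: "distinct (concat X)"
    and rowsX: "\<forall>row\<in>set X. sorted_wrt (<) row"
    and colX: "\<And>r c. Suc r < length X \<Longrightarrow> c < length (X ! Suc r) \<Longrightarrow> X ! r ! c < X ! Suc r ! c"
    using X mu by (auto simp: SYT_def is_partition_def)
  have lX: "length X = length mu" using mlX by auto
  have rX: "r \<le> length X" using r lX by simp
  have lenk: "length (X ! k) = part_at mu k" if "k < length X" for k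
  proof -
    have "length (X ! k) = mu ! k" using mlX that by (metis nth_map)
    then show ?thesis using that lX by (simp add: part_at_def)
  qed
  have nX: "n \<notin> set (concat X)" unfolding sX using n by simp
  have bX: "X ! k ! j < n" if "k < length X" "j < length (X ! k)" for k j
  proof -
    have "X ! k ! j \<in> {1..n - 1}" using entry_in[OF that] unfolding sX .
    then have "X ! k ! j \<le> n - 1" by simp
    then show ?thesis using n by linarith
  qed
  define T where "T = addbox r n X"
  have lT: "length T = (if r < length X then length X else Suc (length X))"
    using length_addbox[OF rX] by (simp add: T_def)
  have nT: "T ! k = (if k = r then rowX X r @ [n] else X ! k)" if "k < length T" for k
    using nth_addbox[OF rX] that by (simp add: T_def)
  have lrow: "length (rowX X r) = part_at mu r" using lenk by (simp add: rowX_def part_at_def lX)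
  have mT: "map length T = lam" using map_length_addbox[OF rX] mlX la by (simp add: T_def)
  have sT: "set (concat T) = {1..n}" using concat_addbox(1)[OF rX, of n] sX n by (auto simp: T_def)
  have dT: "distinct (concat T)" using concat_addbox(2)[OF rX, of n] dX nX by (simp add: T_def)
  have rowsT: "sorted_wrt (<) row" if "row \<in> set T" for row
  proof -
    have "row \<in> insert (rowX X r @ [n]) (set X)" using set_addbox[OF rX] that by (auto simp: T_def)
    moreover have "sorted_wrt (<) (rowX X r @ [n])"
    proof (cases "r < length X")
      case True
      then have "sorted_wrt (<) (X ! r)" using rowsX by simp
      moreover have "\<forall>y\<in>set (X ! r). y < n"
        using bX True by (auto simp: in_set_conv_nth)
      ultimately show ?thesis using True by (simp add: rowX_def sorted_wrt_append)
    next
      case False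
      then show ?thesis by (simp add: rowX_def)
    qed
    ultimately show ?thesis using rowsX by auto
  qed
  have colT: "T ! k ! j < T ! Suc k ! j" if k: "Suc k < length T" and j: "j < length (T ! Suc k)" for k j
  proof -
    consider "k = r" | "Suc k = r" | "k \<noteq> r" "Suc k \<noteq> r" by blast
    then show ?thesis
    proof cases
      case 1
      have rl: "r < length X" "Suc r < length X" using k lT 1 by (auto split: if_splits)
      have j': "j < length (X ! Suc r)" using j nT[OF k] 1 by simp
      have "part_at mu (Suc r) \<le> part_at mu r" using partition_part_at_mono[OF mu] by simp
      then have jr: "j < length (X ! r)" using j' lenk rl by simp
      have "T ! r = X ! r @ [n]" using nT[of r] rl lT by (simp add: rowX_def)
      then have "T ! r ! j = X ! r ! j" using jr by (simp add: nth_append)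
      moreover have "T ! Suc r ! j = X ! Suc r ! j" using nT[OF k] 1 by simp
      ultimately show ?thesis using colX[OF rl(2) j'] 1 by simp
    next
      case 2
      have kl: "k < length X" using 2 rX by simp
      have Tk: "T ! k = X ! k" using nT[of k] k 2 by simp
      have Tr: "T ! Suc k = rowX X r @ [n]" using nT[OF k] 2 by simp
      show ?thesis
      proof (cases "j < length (rowX X r)")
        case True
        then have rl: "r < length X" by (auto simp: rowX_def split: if_splits)
        have "T ! Suc k ! j = X ! Suc k ! j" using Tr True 2 rl by (simp add: rowX_def nth_append)
        then show ?thesis using colX[of k j] Tk 2 rl True by (simp add: rowX_def)
      next
        case False
        then have jeq: "j = part_at mu r" using j Tr lrow by simp
        have "part_at lam r \<le> part_at lam k" using partition_part_at_mono[OF lam] 2 by simp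
        then have "j < part_at mu k" using part_at_addpart[OF r] la jeq 2 by simp
        then have jk: "j < length (X ! k)" using lenk[OF kl] by simp
        have "T ! Suc k ! j = n" using Tr False j by (simp add: nth_append)
        then show ?thesis using bX[OF kl jk] Tk by simp
      qed
    next
      case 3
      have kl: "Suc k < length X" using k 3 lT rX by (auto split: if_splits)
      then show ?thesis using nT[of k] nT[of "Suc k"] k 3 j colX by simp
    qed
  qed
  have "sum_list lam = n" using lam by (simp add: is_partition_def)
  then show ?thesis using mT sT dT rowsT colT by (auto simp: SYT_def T_def[symmetric])
qed

definition crow :: "nat list \<Rightarrow> nat list \<Rightarrow> nat" where
  "crow lam mu = (SOME r. r \<le> length mu \<and> lam = addpart r mu)"

definition gmap :: "nat list \<Rightarrow> nat \<Rightarrow> nat list \<times> nat list list \<Rightarrow> nat list list" where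
  "gmap lam n a = addbox (crow lam (fst a)) n (snd a)"

definition delx :: "nat \<Rightarrow> nat list list \<Rightarrow> nat list list" where
  "delx n T = filter (\<lambda>row. row \<noteq> []) (map (filter (\<lambda>y. y \<noteq> n)) T)"

definition fmap :: "nat \<Rightarrow> nat list list \<Rightarrow> nat list \<times> nat list list" where
  "fmap n T = (map length (delx n T), delx n T)"

lemma delx_addbox:
  assumes r: "r \<le> length X" and ne: "\<forall>row\<in>set X. row \<noteq> []" and nX: "n \<notin> set (concat X)"
  shows "delx n (addbox r n X) = X"
proof -
  have m: "map (filter (\<lambda>y. y \<noteq> n)) X = X"
    using nX by (intro map_idI) (auto intro: filter_True)
  have f: "filter (\<lambda>row. row \<noteq> []) X = X" using ne by (simp add: filter_id_conv)
  show ?thesis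
  proof (cases "r < length X")
    case True
    have "filter (\<lambda>y. y \<noteq> n) (X ! r @ [n]) = X ! r"
      using nX True by (auto intro: filter_True)
    then show ?thesis using True m f
      by (simp add: addbox_def delx_def map_update)
  next
    case False
    then show ?thesis using m f by (simp add: addbox_def delx_def)
  qed
qed

lemma fmap_addbox:
  assumes "r \<le> length X" "\<forall>row\<in>set X. row \<noteq> []" "n \<notin> set (concat X)"
  shows "fmap n (addbox r n X) = (map length X, X)"
  using delx_addbox[OF assms] by (simp add: fmap_def)

lemma crow_spec:
  assumes "is_partition n lam" "is_partition (n - 1) mu" "single_box lam mu"
  shows "crow lam mu \<le> length mu \<and> lam = addpart (crow lam mu) mu"
  using single_box_ex[OF assms] unfolding crow_def by (rule someI_ex)

lemma crow_eq:
  assumes "r \<le> length mu" "lam = addpart r mu"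
  shows "crow lam mu = r"
proof -
  have "crow lam mu \<le> length mu \<and> lam = addpart (crow lam mu) mu"
    unfolding crow_def by (rule someI[of _ r]) (use assms in simp)
  then show ?thesis using addpart_inj assms by metis
qed

lemma SYT_facts:
  assumes "X \<in> SYT mu" "is_partition N mu"
  shows "map length X = mu" "set (concat X) = {1..N}" "\<forall>row\<in>set X. row \<noteq> []"
  using assms by (auto simp: SYT_def is_partition_def)

lemma gmap_in:
  assumes lam: "is_partition n lam" and n: "1 \<le> n"
    and a: "a \<in> (SIGMA mu:{mu. is_partition (n - 1) mu \<and> single_box lam mu}. SYT mu)"
  shows "gmap lam n a \<in> SYT lam" "fmap n (gmap lam n a) = a"
proof -
  obtain mu X where aa: "a = (mu, X)" and mu: "is_partition (n - 1) mu" "single_box lam mu"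
    and X: "X \<in> SYT mu" using a by auto
  note cs = crow_spec[OF lam mu]
  show "gmap lam n a \<in> SYT lam"
    using SYT_add[OF X mu(1) lam conjunct1[OF cs] conjunct2[OF cs] n] aa by (simp add: gmap_def)
  have "n \<notin> set (concat X)" using SYT_facts(2)[OF X mu(1)] n by auto
  moreover have "crow lam mu \<le> length X" using cs SYT_facts(1)[OF X mu(1)] by auto
  ultimately show "fmap n (gmap lam n a) = a"
    using fmap_addbox[of "crow lam mu" X n] SYT_facts[OF X mu(1)] aa by (simp add: gmap_def)
qed

lemma fmap_in:
  assumes lam: "is_partition n lam" and n: "1 \<le> n" and T: "T \<in> SYT lam"
  shows "fmap n T \<in> (SIGMA mu:{mu. is_partition (n - 1) mu \<and> single_box lam mu}. SYT mu)"
    "gmap lam n (fmap n T) = T"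
proof -
  obtain r X where r: "r \<le> length X" and TX: "T = addbox r n X"
    and mu: "is_partition (n - 1) (map length X)" and X: "X \<in> SYT (map length X)"
    and nX: "n \<notin> set (concat X)"
    using SYT_remove[OF T lam n] by blast
  have ne: "\<forall>row\<in>set X. row \<noteq> []" using SYT_facts(3)[OF X mu] .
  have f: "fmap n T = (map length X, X)" using fmap_addbox[OF r ne nX] TX by simp
  have la: "lam = addpart r (map length X)"
    using map_length_addbox[OF r, of n] TX T by (simp add: SYT_def)
  have sb: "single_box lam (map length X)" using single_box_addpart[of r "map length X"] r la by simp
  show "fmap n T \<in> (SIGMA mu:{mu. is_partition (n - 1) mu \<and> single_box lam mu}. SYT mu)"
    using f mu sb X by simp
  have "crow lam (map length X) = r" using crow_eq[of r "map length X" lam] r la by simp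
  then show "gmap lam n (fmap n T) = T" using f TX by (simp add: gmap_def)
qed

lemma dyck_ins:
  assumes "i + 2 * m < n"
  shows "dyck_interval n (ins p n w) i m \<longleftrightarrow> dyck_interval (n - 1) w i m"
  using assms by (auto simp: dyck_interval_def filter_ins)

lemma core:
  assumes lam: "is_partition n lam" and n: "1 \<le> n"
    and mu: "is_partition (n - 1) mu" "single_box lam mu" and X: "X \<in> SYT mu"
    and b: "b \<in> (SIGMA mu:{mu. is_partition (n - 1) mu \<and> single_box lam mu}. SYT mu)"
  shows "(gmap lam n (mu, X), l, gmap lam n b) \<in> snd (remove_label_containing n (CS lam))
     \<longleftrightarrow> ((mu, X), l, b) \<in> snd (disj_union {mu. is_partition (n - 1) mu \<and> single_box lam mu} CS)"
proof -
  define S where "S = {mu. is_partition (n - 1) mu \<and> single_box lam mu}"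
  define r where "r = crow lam mu"
  have cs: "r \<le> length mu" "lam = addpart r mu" using crow_spec[OF lam mu] by (auto simp: r_def)
  have mlX: "map length X = mu" and sX: "set (concat X) = {1..n - 1}"
    using SYT_facts[OF X mu(1)] by auto
  define w where "w = row_word X"
  define p where "p = sum_list (drop r mu)"
  have rX: "r \<le> length X" using cs mlX by auto
  have rw: "row_word (gmap lam n (mu, X)) = ins p n w"
    using row_word_addbox[OF rX, of n] mlX by (simp add: gmap_def r_def[symmetric] p_def w_def drop_map[symmetric])
  have smu: "sum_list mu = n - 1" using mu by (simp add: is_partition_def)
  have lw: "length w = n - 1" using length_row_word[of X] mlX smu by (simp add: w_def)
  have pl: "p \<le> length w"
    using lw smu by (metis p_def append_take_drop_id le_add2 sum_list_append)
  have setw: "set w = {1..n - 1}" using sX by (simp add: w_def set_row_word)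
  have slam: "sum_list lam = n" using lam by (simp add: is_partition_def)
  obtain mu2 Y where bb: "b = (mu2, Y)" and mu2: "mu2 \<in> S" and Y: "Y \<in> SYT mu2"
    using b by (auto simp: S_def)
  have K3: "reshape lam (std_word (ins p n b'')) = addbox r n (reshape mu (std_word b''))
        \<and> fmap n (addbox r n (reshape mu (std_word b''))) = (mu, reshape mu (std_word b''))"
    if fo: "f_op i (collapse i m w) = Some b''" and im: "i + 2 * m < n" and m1: "1 \<le> m" for i m b''
  proof -
    have lb: "length b'' = n - 1" using f_op_set[OF fo] lw by simp
    have "set b'' \<subseteq> insert (Suc i) (set (collapse i m w))" using f_op_set[OF fo] by simp
    also have "\<dots> \<subseteq> {1..n - 1} \<union> {i, Suc i}" using set_collapse[of i m w] setw by auto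
    finally have sb: "set b'' \<subseteq> {1..n - 1} \<union> {i, Suc i}" .
    have lt: "\<forall>y\<in>set b''. y < n"
    proof
      fix y assume "y \<in> set b''"
      then have "y \<le> n - 1 \<or> y = i \<or> y = Suc i" using sb by auto
      then show "y < n" using im m1 n by linarith
    qed
    have st: "std_word (ins p n b'') = ins p n (std_word b'')"
      using std_ins[OF lt, of p] pl lw lb n by simp
    define Z where "Z = reshape mu (std_word b'')"
    have lv: "length (std_word b'') = sum_list mu" using lb smu by simp
    have e1: "reshape lam (std_word (ins p n b'')) = addbox r n Z"
      using reshape_ins[OF lv cs(1), of n] st cs(2) by (simp add: Z_def p_def)
    have mZ: "map length Z = mu" "row_word Z = std_word b''" using reshape_props[OF lv] by (auto simp: Z_def)
    have rZ: "r \<le> length Z" using mZ cs by auto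
    have neZ: "\<forall>row\<in>set Z. row \<noteq> []"
    proof
      fix row assume "row \<in> set Z"
      then have "length row \<in> set mu" using mZ(1) by force
      then show "row \<noteq> []" using mu by (auto simp: is_partition_def)
    qed
    have nZ: "n \<notin> set (concat Z)"
    proof
      assume "n \<in> set (concat Z)"
      then have "n \<in> set (std_word b'')" using mZ(2) set_row_word by metis
      then have "n \<le> length b''" using std_bound by blast
      then show False using lb n by simp
    qed
    show ?thesis using e1 fmap_addbox[OF rZ neZ nZ] mZ(1) by (simp add: Z_def)
  qed
  show ?thesis
  proof
    assume "(gmap lam n (mu, X), l, gmap lam n b) \<in> snd (remove_label_containing n (CS lam))"
    then obtain i m b' where l: "l = {i..i + 2 * m}" and nl: "n \<notin> {i..i + 2 * m}"
      and gb: "gmap lam n b = reshape lam (std_word b')"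
      and dy: "dyck_interval n (ins p n w) i m"
      and fo: "f_op i (collapse i m (ins p n w)) = Some b'"
      by (auto simp: remove_label_containing_def CS_def slam rw)
    have im: "i + 2 * m < n" "1 \<le> m" "1 \<le> i" using dy nl by (auto simp: dyck_interval_def)
    have dy': "dyck_interval (n - 1) w i m" using dy dyck_ins[OF im(1)] by simp
    have "f_op i (collapse i m (ins p n w)) = map_option (ins p n) (f_op i (collapse i m w))"
      using collapse_ins[OF im(1)] f_op_ins[of n i p "collapse i m w"] im pl by simp
    then obtain b'' where fo': "f_op i (collapse i m w) = Some b''" and bb': "b' = ins p n b''"
      using fo by (cases "f_op i (collapse i m w)") auto
    note k = K3[OF fo' im(1) im(2)]
    have "b = fmap n (gmap lam n b)" using gmap_in(2)[OF lam n b] by simp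
    also have "\<dots> = (mu, reshape mu (std_word b''))" using k gb bb' by simp
    finally have b2: "b = (mu, reshape mu (std_word b''))" .
    have "(X, l, reshape mu (std_word b'')) \<in> snd (CS mu)"
      unfolding CS_def using X dy' fo' l smu by (auto simp: w_def)
    then show "((mu, X), l, b) \<in> snd (disj_union {mu. is_partition (n - 1) mu \<and> single_box lam mu} CS)"
      unfolding disj_union_def using b2 mu by (auto simp: S_def)
  next
    assume "((mu, X), l, b) \<in> snd (disj_union {mu. is_partition (n - 1) mu \<and> single_box lam mu} CS)"
    then have "(X, l, Y) \<in> snd (CS mu)" and m2: "mu2 = mu"
      unfolding disj_union_def using bb by auto
    then obtain i m b'' where l: "l = {i..i + 2 * m}" and Yd: "Y = reshape mu (std_word b'')"
      and dy: "dyck_interval (n - 1) w i m" and fo: "f_op i (collapse i m w) = Some b''"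
      by (auto simp: CS_def smu w_def)
    have im: "i + 2 * m < n" "1 \<le> m" "1 \<le> i" using dy n by (auto simp: dyck_interval_def)
    have dy': "dyck_interval n (ins p n w) i m" using dy dyck_ins[OF im(1)] by simp
    have fo': "f_op i (collapse i m (ins p n w)) = Some (ins p n b'')"
      using collapse_ins[OF im(1)] f_op_ins[of n i p "collapse i m w"] im pl fo by simp
    note k = K3[OF fo im(1) im(2)]
    have gb: "gmap lam n b = reshape lam (std_word (ins p n b''))"
      using k bb m2 Yd by (simp add: gmap_def r_def)
    have "(gmap lam n (mu, X), l, gmap lam n b) \<in> snd (CS lam)"
      unfolding CS_def using gmap_in(1)[OF lam n, of "(mu, X)"] mu X dy' fo' l gb slam rw
      by (auto simp: S_def)
    moreover have "n \<notin> l" using l im by auto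
    ultimately show "(gmap lam n (mu, X), l, gmap lam n b) \<in> snd (remove_label_containing n (CS lam))"
      by (simp add: remove_label_containing_def)
  qed
qed

theorem theorem4p11:
  fixes n :: nat and lam :: "nat list"
  assumes "1 \<le> n" and "is_partition n lam"
  shows "lgraph_iso (remove_label_containing n (CS lam))
           (disj_union {mu. is_partition (n - 1) mu \<and> single_box lam mu} CS)"
proof -
  note n = assms(1) and lam = assms(2)
  define S where "S = {mu. is_partition (n - 1) mu \<and> single_box lam mu}"
  have f1: "fst (remove_label_containing n (CS lam)) = SYT lam"
    by (simp add: remove_label_containing_def CS_def)
  have f2: "fst (disj_union S CS) = (SIGMA mu:S. SYT mu)"
    by (simp add: disj_union_def CS_def)
  have bij: "bij_betw (fmap n) (SYT lam) (SIGMA mu:S. SYT mu)"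
  proof (rule bij_betw_byWitness[where f' = "gmap lam n"])
    show "\<forall>a\<in>SYT lam. gmap lam n (fmap n a) = a" using fmap_in(2)[OF lam n] by blast
    show "\<forall>a\<in>(SIGMA mu:S. SYT mu). fmap n (gmap lam n a) = a" using gmap_in(2)[OF lam n] by (simp add: S_def)
    show "fmap n ` SYT lam \<subseteq> (SIGMA mu:S. SYT mu)" using fmap_in(1)[OF lam n] unfolding S_def by blast
    show "gmap lam n ` (SIGMA mu:S. SYT mu) \<subseteq> SYT lam" using gmap_in(1)[OF lam n] by (auto simp: S_def)
  qed
  have edges: "(u, l, v) \<in> snd (remove_label_containing n (CS lam))
      \<longleftrightarrow> (fmap n u, l, fmap n v) \<in> snd (disj_union S CS)"
    if u: "u \<in> SYT lam" and v: "v \<in> SYT lam" for u v l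
  proof -
    obtain mu X where ux: "fmap n u = (mu, X)" by fastforce
    have "(mu, X) \<in> (SIGMA mu:S. SYT mu)" using fmap_in(1)[OF lam n u] ux by (simp add: S_def)
    then have mu: "is_partition (n - 1) mu" "single_box lam mu" and X: "X \<in> SYT mu" by (auto simp: S_def)
    have b: "fmap n v \<in> (SIGMA mu:{mu. is_partition (n - 1) mu \<and> single_box lam mu}. SYT mu)"
      using fmap_in(1)[OF lam n v] .
    have uu: "u = gmap lam n (mu, X)" using fmap_in(2)[OF lam n u] ux by simp
    have vv: "v = gmap lam n (fmap n v)" using fmap_in(2)[OF lam n v] by simp
    show ?thesis using core[OF lam n mu X b, of l] uu vv ux by (simp add: S_def)
  qed
  show ?thesis
    unfolding lgraph_iso_def S_def[symmetric] f1 f2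
    using bij edges by blast
qed

end
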